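(* Let $M,N>0$. Define a sequence $a^{(m)}=a^{(m)}(M,N)$ by $a^{(0)}=M$ and, for $m\ge1$, $$a^{(m)}=Nm\sum_{r=0}^{m-1}\binom{m-1}{r}a^{(r)}a^{(m-r-1)}+\frac{N}{m+1}\sum_{r=2}^{m-1}\binom{m+1}{r}a^{(r)}a^{(m-r+1)}.$$ Then $\sum_{m=0}^\infty a^{(m)}t^m/m!$ converges in a neighborhood of $t=0$ and its sum equals $$a(t)=\frac{M+t\left(M^2N+\frac{1}{2N}\right)-t\sqrt{\frac{1}{4N^2}-t\left(2M^3N+\frac{M}{N}\right)-t^2M^4N^2}}{t^2+1}.$$
   Context: An empty sum equals $0$. *)

theory Defs
  imports Complex_Main
begin

function aseq :: "real \<Rightarrow> real \<Rightarrow> nat \<Rightarrow> real" where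
  "aseq M N 0 = M"
| "aseq M N (Suc k) =
     (let m = Suc k in
      N * real m * (\<Sum>r\<in>{0..m-1}. real ((m-1) choose r) * aseq M N r * aseq M N (m - r - 1))
      + N / real (m+1) * (\<Sum>r\<in>{2..m-1}. real ((m+1) choose r) * aseq M N r * aseq M N (m - r + 1)))"
  by pat_completeness auto
termination
  by (relation "measure (\<lambda>(M,N,m). m)") auto

end

theory Submission
  imports Defs
begin


declare aseq.simps(2)[simp del]

lemma aseq_nonneg:
  assumes "M \<ge> 0" "N \<ge> 0"
  shows "aseq M N m \<ge> 0"
proof (induction m rule: less_induct)
  case (less m)
  show ?case
  proof (cases m)
    case 0 then show ?thesis using assms by (simp add: aseq.simps(1))
  next
    case (Suc k)
    have h: "\<And>r. r < m \<Longrightarrow> aseq M N r \<ge> 0" using less by blast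
    show ?thesis unfolding Suc aseq.simps(2) Let_def
      using assms h Suc
      by (intro add_nonneg_nonneg mult_nonneg_nonneg sum_nonneg divide_nonneg_nonneg) auto
  qed
qed

lemma b_rec:
  fixes M N :: real
  defines "b \<equiv> \<lambda>m. aseq M N m / fact m"
  shows "b (Suc k) = N * (\<Sum>r\<le>k. b r * b (k - r)) + N * (\<Sum>r\<in>{2..k}. b r * b (k + 2 - r))"
proof -
  let ?A = "aseq M N"
  have e: "?A (Suc k) = N * real (Suc k) * (\<Sum>r\<le>k. real (k choose r) * ?A r * ?A (k - r))
      + N / real (k+2) * (\<Sum>r\<in>{2..k}. real ((k+2) choose r) * ?A r * ?A (k + 2 - r))"
  proof -
    have s2: "(\<Sum>r\<in>{2..k}. real ((Suc k + 1) choose r) * ?A r * ?A (Suc k - r + 1))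
       = (\<Sum>r\<in>{2..k}. real ((k+2) choose r) * ?A r * ?A (k + 2 - r))"
      by (rule sum.cong) (auto simp del: aseq.simps simp: Suc_diff_le)
    have s1: "(\<Sum>r\<in>{0..k}. real (k choose r) * ?A r * ?A (Suc k - r - 1))
       = (\<Sum>r\<le>k. real (k choose r) * ?A r * ?A (k - r))"
      by (simp del: aseq.simps add: atMost_atLeast0)
    have e0: "?A (Suc k) = N * real (Suc k) * (\<Sum>r\<in>{0..Suc k - 1}. real ((Suc k - 1) choose r) * ?A r * ?A (Suc k - r - 1))
        + N / real (Suc k + 1) * (\<Sum>r\<in>{2..Suc k - 1}. real ((Suc k + 1) choose r) * ?A r * ?A (Suc k - r + 1))"
      by (simp only: aseq.simps(2) Let_def)
    have "Suc k - 1 = k" by simp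
    have "real (Suc k + 1) = real (k+2)" by simp
    then show ?thesis using e0 s1 s2 \<open>Suc k - 1 = k\<close> by (simp only:)
  qed
  have t1: "N * real (Suc k) * (\<Sum>r\<le>k. real (k choose r) * ?A r * ?A (k - r)) / fact (Suc k)
      = N * (\<Sum>r\<le>k. b r * b (k - r))"
  proof -
    have "\<And>r. r \<le> k \<Longrightarrow> real (k choose r) * ?A r * ?A (k - r) / fact k = b r * b (k - r)"
      by (simp del: aseq.simps add: b_def binomial_fact field_simps)
    then have "(\<Sum>r\<le>k. real (k choose r) * ?A r * ?A (k - r)) / fact k = (\<Sum>r\<le>k. b r * b (k - r))"
      by (simp add: sum_divide_distrib)
    then show ?thesis by (simp add: field_simps del: aseq.simps of_nat_Suc)
  qed
  have t2: "N / real (k+2) * (\<Sum>r\<in>{2..k}. real ((k+2) choose r) * ?A r * ?A (k + 2 - r)) / fact (Suc k)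
      = N * (\<Sum>r\<in>{2..k}. b r * b (k + 2 - r))"
  proof -
    have gen: "(F / (x * y)) * P * Q / F = (P / x) * (Q / y)" if "F \<noteq> 0" for F x y P Q :: real
      using that by (simp add: field_simps)
    have "\<And>r. r \<in> {2..k} \<Longrightarrow> real ((k+2) choose r) * ?A r * ?A (k + 2 - r) / fact (k+2) = b r * b (k + 2 - r)"
    proof -
      fix r assume "r \<in> {2..k}"
      then have "real ((k+2) choose r) = fact (k+2) / (fact r * fact (k+2-r))" by (intro binomial_fact) auto
      then show "real ((k+2) choose r) * ?A r * ?A (k + 2 - r) / fact (k+2) = b r * b (k + 2 - r)"
        unfolding b_def by (simp only: gen[OF fact_nonzero])
    qed
    then have "(\<Sum>r\<in>{2..k}. real ((k+2) choose r) * ?A r * ?A (k + 2 - r)) / fact (k+2) = (\<Sum>r\<in>{2..k}. b r * b (k + 2 - r))"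
      by (simp add: sum_divide_distrib)
    moreover have "fact (k+2) = real (k+2) * (fact (Suc k) :: real)"
      by (simp add: fact_Suc[of "Suc k"])
    ultimately show ?thesis by (simp add: field_simps del: aseq.simps of_nat_Suc of_nat_add)
  qed
  show ?thesis unfolding b_def using e t1 t2 by (simp del: aseq.simps add: add_divide_distrib b_def)
qed




lemma L1:
  fixes x :: "nat \<Rightarrow> real"
  assumes "\<And>j. x j \<ge> 0"
  shows "(\<Sum>k\<le>n. \<Sum>i\<le>k. x i * x (k - i)) \<le> (\<Sum>j\<le>n. x j)^2"
proof -
  have "(\<Sum>k\<le>n. \<Sum>i\<le>k. x i * x (k - i)) = (\<Sum>(i,j)\<in>{(i,j). i+j \<le> n}. x i * x j)"
    by (rule sum.triangle_reindex_eq[symmetric])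
  also have "\<dots> \<le> (\<Sum>(i,j)\<in>{..n}\<times>{..n}. x i * x j)"
    by (rule sum_mono2) (auto intro: mult_nonneg_nonneg assms)
  also have "\<dots> = (\<Sum>j\<le>n. x j)^2"
    by (simp add: power2_eq_square sum_product sum.cartesian_product)
  finally show ?thesis .
qed

lemma L2a:
  fixes x :: "nat \<Rightarrow> real"
  assumes "\<And>j. x j \<ge> 0"
  shows "(\<Sum>k\<le>n+2. \<Sum>i\<le>k. x i * x (k - i)) \<le> (\<Sum>j\<le>n. x j)^2 + (\<Sum>(i,j)\<in>{(i,j). i+j \<le> n+2} - {..n}\<times>{..n}. x i * x j)"
proof -
  have fin: "finite {(i,j). i+j \<le> (n+2::nat)}"
    by (rule finite_subset[of _ "{..n+2}\<times>{..n+2}"]) auto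
  have "(\<Sum>k\<le>n+2. \<Sum>i\<le>k. x i * x (k - i)) = (\<Sum>(i,j)\<in>{(i,j). i+j \<le> n+2}. x i * x j)"
    by (rule sum.triangle_reindex_eq[symmetric])
  also have "\<dots> = (\<Sum>(i,j)\<in>{(i,j). i+j \<le> n+2} \<inter> {..n}\<times>{..n}. x i * x j) + (\<Sum>(i,j)\<in>{(i,j). i+j \<le> n+2} - {..n}\<times>{..n}. x i * x j)"
  proof -
    have "{(i,j). i+j \<le> n+2} - {(i,j). i+j \<le> n+2} \<inter> {..n}\<times>{..n} = {(i,j). i+j \<le> n+2} - {..n}\<times>{..n}" by blast
    then show ?thesis using sum.subset_diff[OF Int_lower1 fin, of "\<lambda>(i,j). x i * x j" "{..n}\<times>{..n}"] by simp
  qed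
  also have "(\<Sum>(i,j)\<in>{(i,j). i+j \<le> n+2} \<inter> {..n}\<times>{..n}. x i * x j) \<le> (\<Sum>(i,j)\<in>{..n}\<times>{..n}. x i * x j)"
    by (rule sum_mono2) (auto intro: mult_nonneg_nonneg assms)
  also have "\<dots> = (\<Sum>j\<le>n. x j)^2"
    by (simp add: power2_eq_square sum_product sum.cartesian_product)
  finally show ?thesis by simp
qed


lemma L2:
  fixes x :: "nat \<Rightarrow> real" and n :: nat
  assumes "\<And>j. x j \<ge> 0" "\<And>j. j < 2 \<Longrightarrow> x j = 0"
  shows "(\<Sum>k\<le>n+2. \<Sum>i\<le>k. x i * x (k - i)) \<le> (\<Sum>j\<le>n. x j)^2"
proof -
  have "(\<Sum>(i,j)\<in>{(i,j). i+j \<le> n+2} - {..n}\<times>{..n}. x i * x j) = 0"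
  proof -
    have z: "x i * x j = 0" if "i + j \<le> n+2" "\<not> (i \<le> n \<and> j \<le> n)" for i j
    proof -
      from that have "i < 2 \<or> j < 2" by auto
      then show ?thesis using assms(2) by auto
    qed
    show ?thesis by (rule sum.neutral) (auto intro: z)
  qed
  then show ?thesis using L2a[of x n, OF assms(1)] by simp
qed

lemma cc_eq:
  fixes x :: "nat \<Rightarrow> real"
  shows "(\<Sum>r\<in>{2..k}. x r * x (k + 2 - r)) = (\<Sum>i\<le>k+2. (if 2 \<le> i then x i else 0) * (if 2 \<le> k + 2 - i then x (k + 2 - i) else 0))"
proof (rule sum.mono_neutral_cong_left)
  show "finite {..k+2}" by simp
  show "{2..k} \<subseteq> {..k+2}" by auto
  show "\<forall>i\<in>{..k + 2} - {2..k}. (if 2 \<le> i then x i else 0) * (if 2 \<le> k + 2 - i then x (k + 2 - i) else 0) = 0"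
    by auto
  show "\<And>r. r \<in> {2..k} \<Longrightarrow> x r * x (k + 2 - r) = (if 2 \<le> r then x r else 0) * (if 2 \<le> k + 2 - r then x (k + 2 - r) else 0)"
    by auto
qed

lemma sum_shift2:
  fixes g :: "nat \<Rightarrow> real"
  shows "(\<Sum>k\<le>n+2. g k) = g 0 + g 1 + (\<Sum>k\<le>n. g (k+2))"
proof -
  have "(\<Sum>k\<le>Suc (Suc n). g k) = g 0 + (\<Sum>k\<le>Suc n. g (Suc k))" by (rule sum.atMost_Suc_shift)
  also have "(\<Sum>k\<le>Suc n. g (Suc k)) = g 1 + (\<Sum>k\<le>n. g (Suc (Suc k)))" by (subst sum.atMost_Suc_shift) simp
  finally show ?thesis by (simp add: add_ac)
qed



context
  fixes b :: "nat \<Rightarrow> real" and M N :: real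
  assumes brec: "\<And>k. b (Suc k) = N * (\<Sum>r\<le>k. b r * b (k - r)) + N * (\<Sum>r\<in>{2..k}. b r * b (k + 2 - r))"
    and b0: "b 0 = M" and bnn: "\<And>m. b m \<ge> 0" and Mpos: "M > 0" and Npos: "N > 0"
begin

lemma b1: "b 1 = M^2 * N"
  using brec[of 0] b0 by (simp add: power2_eq_square)

lemma a_rec:
  fixes t :: real
  assumes "t \<noteq> 0"
  shows "b (Suc k) * t^(Suc k) = N * t * (\<Sum>r\<le>k. (b r * t^r) * (b (k - r) * t^(k-r)))
     + N / t * (\<Sum>r\<in>{2..k}. (b r * t^r) * (b (k + 2 - r) * t^(k + 2 - r)))"
proof -
  have s1: "(\<Sum>r\<le>k. (b r * t^r) * (b (k - r) * t^(k-r))) = (\<Sum>r\<le>k. b r * b (k - r)) * t^k"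
    unfolding sum_distrib_right
  proof (rule sum.cong)
    fix r assume "r \<in> {..k}"
    then have "t^r * t^(k-r) = t^k" by (simp add: power_add[symmetric])
    then show "(b r * t^r) * (b (k - r) * t^(k-r)) = b r * b (k - r) * t^k"
      by (simp add: mult_ac)
  qed simp
  have s2: "(\<Sum>r\<in>{2..k}. (b r * t^r) * (b (k + 2 - r) * t^(k + 2 - r))) = (\<Sum>r\<in>{2..k}. b r * b (k + 2 - r)) * t^(k+2)"
    unfolding sum_distrib_right
  proof (rule sum.cong)
    fix r assume "r \<in> {2..k}"
    then have "t^r * t^(k+2-r) = t^(k+2)" by (simp add: power_add[symmetric])
    then show "(b r * t^r) * (b (k + 2 - r) * t^(k + 2 - r)) = b r * b (k + 2 - r) * t^(k+2)"
      by (simp add: mult_ac)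
  qed simp
  have p1: "N * t * ((\<Sum>r\<le>k. b r * b (k - r)) * t^k) = N * (\<Sum>r\<le>k. b r * b (k - r)) * t^(Suc k)"
    by (simp add: mult_ac)
  have p2: "N / t * ((\<Sum>r\<in>{2..k}. b r * b (k + 2 - r)) * t^(k+2)) = N * (\<Sum>r\<in>{2..k}. b r * b (k + 2 - r)) * t^(Suc k)"
  proof -
    have "t^(k+2) = t^(Suc k) * t" by simp
    then show ?thesis using assms by simp
  qed
  show ?thesis unfolding s1 s2 brec[of k] p1 p2 by (simp add: algebra_simps)
qed

lemma bound: "\<exists>t>0. \<exists>C. \<forall>m. b m * t^m \<le> C"
proof -
  define \<alpha> where "\<alpha> = M^2*N + 1/(2*N)"
  define \<beta> where "\<beta> = 1/(2*N)"
  define K where "K = 2*M*\<alpha> + \<alpha>^2"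
  define t where "t = min 1 (1/(4*N^2*K))"
  have apos: "\<alpha> > 0" unfolding \<alpha>_def using Mpos Npos by (intro add_pos_pos) simp_all
  have Kpos: "K > 0" unfolding K_def using apos Mpos by (intro add_pos_pos) simp_all
  have tpos: "t > 0" unfolding t_def using Kpos Npos by simp
  have tle1: "t \<le> 1" unfolding t_def by simp
  have tK: "K * t \<le> 1/(4*N^2)"
  proof -
    have "t \<le> 1/(4*N^2*K)" unfolding t_def by simp
    then have "K * t \<le> K * (1/(4*N^2*K))" by (rule mult_left_mono) (use Kpos in auto)
    also have "\<dots> = 1/(4*N^2)" using Kpos by simp
    finally show ?thesis .
  qed
  define a where "a = (\<lambda>j. b j * t^j)"
  have ann: "\<And>j. a j \<ge> 0" unfolding a_def using bnn tpos by simp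
  define c where "c = (\<lambda>j. if 2 \<le> j then a j else 0)"
  have cnn: "\<And>j. c j \<ge> 0" unfolding c_def using ann by simp
  define S where "S = (\<lambda>n. \<Sum>j\<le>n. a j)"
  define T where "T = (\<lambda>n. \<Sum>j\<le>n. c j)"
  have Tnn: "\<And>n. T n \<ge> 0" unfolding T_def using cnn by (simp add: sum_nonneg)
  have Snn: "\<And>n. S n \<ge> 0" unfolding S_def using ann by (simp add: sum_nonneg)
  have a0: "a 0 = M" unfolding a_def using b0 by simp
  have a1: "a 1 = M^2*N*t" unfolding a_def using b1 by simp
  have T_eq: "S n = M + M^2*N*t + T n" if "1 \<le> n" for n
    using that
  proof (induction n rule: dec_induct)
    case base
    show ?case unfolding S_def T_def c_def using a0 a1 by simp
  next
    case (step n)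
    have "S (Suc n) = S n + a (Suc n)" unfolding S_def by simp
    moreover have "T (Suc n) = T n + a (Suc n)" unfolding T_def c_def using step(1) by simp
    ultimately show ?case using step(3) by simp
  qed
  have S_le: "S n \<le> M + M^2*N*t + T n" for n
  proof (cases "n = 0")
    case True
    then show ?thesis unfolding S_def T_def c_def using a0 tpos Npos by simp
  next
    case False
    then show ?thesis using T_eq[of n] by simp
  qed
  have key: "S (Suc n) \<le> M + N*t*(S n)^2 + N/t*(T n)^2" for n
  proof -
    define X where "X = (\<Sum>k\<le>n. \<Sum>r\<le>k. a r * a (k - r))"
    define Y where "Y = (\<Sum>k\<le>n. \<Sum>r\<in>{2..k}. a r * a (k + 2 - r))"
    have "S (Suc n) = a 0 + (\<Sum>k\<le>n. a (Suc k))" unfolding S_def by (rule sum.atMost_Suc_shift)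
    also have "(\<Sum>k\<le>n. a (Suc k)) = N*t*X + N/t*Y"
      unfolding a_def X_def Y_def using a_rec[of t] tpos by (simp add: sum.distrib sum_distrib_left)
    finally have e: "S (Suc n) = M + N*t*X + N/t*Y" using a0 by simp
    have X: "X \<le> (S n)^2"
      unfolding S_def X_def by (rule L1[OF ann])
    have Y: "Y \<le> (T n)^2"
    proof -
      define g where "g = (\<lambda>k. \<Sum>i\<le>k. c i * c (k - i))"
      have "Y = (\<Sum>k\<le>n. g (k+2))"
        unfolding Y_def g_def c_def by (rule sum.cong[OF refl]) (rule cc_eq)
      also have "\<dots> \<le> g 0 + g 1 + (\<Sum>k\<le>n. g (k+2))"
        unfolding g_def using cnn by (simp add: sum_nonneg)
      also have "\<dots> = (\<Sum>k\<le>n+2. g k)" by (rule sum_shift2[symmetric])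
      also have "\<dots> \<le> (T n)^2" unfolding g_def T_def
        by (rule L2) (use cnn in \<open>auto simp: c_def\<close>)
      finally show ?thesis .
    qed
    have "N*t*X \<le> N*t*(S n)^2" using X Npos tpos by (intro mult_left_mono) auto
    moreover have "N/t*Y \<le> N/t*(T n)^2" using Y Npos tpos by (intro mult_left_mono) auto
    ultimately show ?thesis using e by linarith
  qed
  have Tb: "T n \<le> \<beta>*t" for n
  proof (induction n)
    case 0
    then show ?case unfolding T_def c_def \<beta>_def using tpos Npos by simp
  next
    case (Suc n)
    have "S n \<le> M + \<alpha>*t" using S_le[of n] Suc unfolding \<alpha>_def \<beta>_def by (simp add: algebra_simps)
    then have "(S n)^2 \<le> (M + \<alpha>*t)^2" using Snn by (simp add: power_mono)
    also have "\<dots> = M^2 + 2*M*\<alpha>*t + \<alpha>^2*t^2" by (simp add: power2_eq_square algebra_simps)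
    also have "\<dots> \<le> M^2 + K*t"
    proof -
      have "t^2 \<le> t" using tpos tle1 by (simp add: power2_eq_square mult_left_le)
      then have "\<alpha>^2*t^2 \<le> \<alpha>^2*t" by (simp add: mult_left_mono)
      then show ?thesis unfolding K_def by (simp add: algebra_simps)
    qed
    also have "\<dots> \<le> M^2 + 1/(4*N^2)" using tK by simp
    finally have S2: "(S n)^2 \<le> M^2 + 1/(4*N^2)" .
    have T2: "(T n)^2 \<le> (\<beta>*t)^2" using Suc Tnn by (simp add: power_mono)
    have "T (Suc n) = S (Suc n) - M - M^2*N*t" using T_eq[of "Suc n"] by simp
    also have "\<dots> \<le> N*t*(M^2 + 1/(4*N^2)) + N/t*(\<beta>*t)^2 - M^2*N*t"
    proof -
      have "N*t*(S n)^2 \<le> N*t*(M^2 + 1/(4*N^2))" using S2 Npos tpos by (intro mult_left_mono) auto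
      moreover have "N/t*(T n)^2 \<le> N/t*(\<beta>*t)^2" using T2 Npos tpos by (intro mult_left_mono) auto
      ultimately show ?thesis using key[of n] by simp
    qed
    also have "\<dots> = \<beta>*t" unfolding \<beta>_def using Npos tpos by (simp add: field_simps power2_eq_square)
    finally show ?case .
  qed
  have "b m * t^m \<le> M + M^2*N*t + \<beta>*t" for m
  proof -
    have "b m * t^m = a m" unfolding a_def by simp
    also have "\<dots> \<le> S m" unfolding S_def by (rule member_le_sum) (use ann in auto)
    also have "\<dots> \<le> M + M^2*N*t + \<beta>*t" using S_le[of m] Tb[of m] by simp
    finally show ?thesis .
  qed
  then show ?thesis using tpos by blast
qed

lemma alg:
  fixes t y Cs :: real
  assumes t0: "t \<noteq> 0" and yeq: "y = M + M^2*N*t + Cs"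
    and eq: "y - M = N*t*y^2 + N/t*Cs^2"
    and spos: "1 - 2*N*(Cs/t + t*y) > 0"
  shows "y = (M + t * (M^2 * N + 1 / (2 * N))
           - t * sqrt (1 / (4 * N^2) - t * (2 * M^3 * N + M / N) - t^2 * M^4 * N^2)) / (t^2 + 1)"
proof -
  define D where "D = 1 / (4 * N^2) - t * (2 * M^3 * N + M / N) - t^2 * M^4 * N^2"
  define s where "s = 1 - 2*N*(Cs/t + t*y)"
  define u where "u = t - 2*N*Cs - 2*N*t^2*y"
  have Nn: "N \<noteq> 0" using Npos by simp
  have us: "u = t * s" unfolding u_def s_def using t0 by (simp add: field_simps power2_eq_square)
  have E: "N*t^2*y^2 + N*Cs^2 - t*y + t*M = 0"
  proof -
    have 1: "t*(y - M) = t*(N*t*y^2 + N/t*Cs^2)" using eq by simp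
    have 2: "t*(N*t*y^2 + N/t*Cs^2) = N*t^2*y^2 + N*Cs^2" using t0 by (simp add: field_simps power2_eq_square)
    have 3: "t*(y - M) = t*y - t*M" by (simp add: algebra_simps)
    show ?thesis using 1 2 3 by linarith
  qed
  have D4: "4*N^2*t^2*D = t^2 - t^3*(8*M^3*N^3 + 4*M*N) - 4*t^4*M^4*N^4"
    unfolding D_def using Nn by (simp add: field_simps eval_nat_numeral)
  have id: "u^2 - (t^2 - t^3*(8*M^3*N^3 + 4*M*N) - 4*t^4*M^4*N^4) = 4*N*(1+t^2)*(N*t^2*y^2 + N*Cs^2 - t*y + t*M)"
    unfolding u_def yeq by algebra
  have "u^2 = 4*N^2*t^2*D" using id E D4 by simp
  then have "t^2 * s^2 = t^2 * (4*N^2*D)" unfolding us by (simp add: power_mult_distrib mult_ac)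
  then have s2: "s^2 = 4*N^2*D" using t0 by simp
  have "D = (s/(2*N))^2" using s2 Nn by (simp add: power_divide field_simps)
  moreover have "s/(2*N) > 0" using spos Npos unfolding s_def by simp
  ultimately have sq: "sqrt D = s/(2*N)" by (metis real_sqrt_abs abs_of_pos)
  have "y * (t^2 + 1) = M + t * (M^2 * N + 1 / (2 * N)) - t * (s/(2*N))"
    unfolding s_def using t0 Nn yeq by (simp add: field_simps power2_eq_square)
  then have h: "y * (t^2 + 1) = M + t * (M^2 * N + 1 / (2 * N)) - t * sqrt D" unfolding sq .
  have pos: "t^2 + 1 \<noteq> 0" by (metis add_pos_nonneg zero_less_one zero_le_power2 less_numeral_extra(3) add.commute)
  show ?thesis using h pos unfolding D_def by (simp add: eq_divide_eq)
qed

lemma main: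
  "\<exists>\<epsilon>>0. \<forall>t::real. \<bar>t\<bar> < \<epsilon> \<longrightarrow>
     (\<lambda>m. b m * t ^ m) sums
       ((M + t * (M^2 * N + 1 / (2 * N))
           - t * sqrt (1 / (4 * N^2) - t * (2 * M^3 * N + M / N) - t^2 * M^4 * N^2))
        / (t^2 + 1))"
proof -
  obtain t1 C where t1: "t1 > 0" and Cb: "\<And>m. b m * t1^m \<le> C" using bound by blast
  have "M \<le> C" using Cb[of 0] b0 by simp
  then have Cpos: "C > 0" using Mpos by simp
  define \<epsilon> where "\<epsilon> = min (t1/2) (1/(8*N*C*(1/t1^2 + 1)))"
  have epos: "\<epsilon> > 0" unfolding \<epsilon>_def using t1 Npos Cpos by (simp add: add_pos_pos)
  have "(\<lambda>m. b m * t ^ m) sums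
       ((M + t * (M^2 * N + 1 / (2 * N))
           - t * sqrt (1 / (4 * N^2) - t * (2 * M^3 * N + M / N) - t^2 * M^4 * N^2))
        / (t^2 + 1))" if tl: "\<bar>t\<bar> < \<epsilon>" for t
  proof (cases "t = 0")
    case True
    have "(\<lambda>m. if m = 0 then b m else 0) sums b 0" by (rule sums_single)
    moreover have "(\<lambda>m. b m * t ^ m) = (\<lambda>m. if m = 0 then b m else 0)" using True by (auto simp: fun_eq_iff)
    ultimately show ?thesis using True b0 by simp
  next
    case False
    define q where "q = \<bar>t\<bar> / t1"
    have q0: "q \<ge> 0" and q1: "q < 1/2" unfolding q_def using t1 tl False
      by (auto simp: \<epsilon>_def field_simps)
    define a where "a = (\<lambda>m. b m * t^m)"
    have abound: "norm (a m) \<le> C * q^m" for m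
    proof -
      have "norm (a m) = b m * t1^m * q^m" unfolding a_def q_def using bnn[of m] t1
        by (simp add: abs_mult power_abs power_divide)
      also have "\<dots> \<le> C * q^m" using Cb[of m] q0 by (simp add: mult_right_mono)
      finally show ?thesis .
    qed
    have geo: "summable (\<lambda>m. C * q^m)" using q0 q1 by (intro summable_mult summable_geometric) simp
    have asum: "summable (\<lambda>m. norm (a m))"
      by (rule summable_comparison_test[OF _ geo]) (use abound in auto)
    define y where "y = suminf a"
    have ay: "a sums y" unfolding y_def using asum by (simp add: summable_norm_cancel summable_sums)
    define c where "c = (\<lambda>j. if 2 \<le> j then a j else 0)"
    have cbound: "norm (c m) \<le> C * q^m" for m unfolding c_def using abound[of m] Cpos q0 by auto
    have csum: "summable (\<lambda>m. norm (c m))"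
      by (rule summable_comparison_test[OF _ geo]) (use cbound in auto)
    define Cs where "Cs = suminf c"
    have cCs: "c sums Cs" unfolding Cs_def using csum by (simp add: summable_norm_cancel summable_sums)
    have a0: "a 0 = M" unfolding a_def using b0 by simp
    have a1: "a 1 = M^2*N*t" unfolding a_def using b1 by simp
    have yeq: "y = M + M^2*N*t + Cs"
    proof -
      have "(\<lambda>i. c (i + 2)) sums Cs" using cCs sums_iff_shift[of c 2 Cs] by (simp add: c_def)
      moreover have "(\<lambda>i. c (i + 2)) = (\<lambda>i. a (i + 2))" unfolding c_def by auto
      ultimately have "(\<lambda>i. a (i + 2)) sums Cs" by simp
      then have "a sums (Cs + (\<Sum>i<2. a i))" using sums_iff_shift by blast
      then have "y = Cs + (\<Sum>i<2. a i)" using ay sums_unique2 by blast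
      then show ?thesis using a0 a1 by (simp add: eval_nat_numeral)
    qed
    have cp1: "(\<lambda>k. \<Sum>i\<le>k. a i * a (k - i)) sums (y * y)"
      using Cauchy_product_sums[OF asum asum] unfolding y_def .
    have cp2: "(\<lambda>k. \<Sum>i\<le>k. c i * c (k - i)) sums (Cs * Cs)"
      using Cauchy_product_sums[OF csum csum] unfolding Cs_def .
    have cp2': "(\<lambda>k. \<Sum>i\<le>k+2. c i * c (k + 2 - i)) sums (Cs * Cs)"
    proof -
      have "(\<Sum>i<2. \<Sum>j\<le>i. c j * c (i - j)) = 0" by (simp add: eval_nat_numeral c_def)
      then show ?thesis using cp2 sums_iff_shift[of "\<lambda>k. \<Sum>i\<le>k. c i * c (k - i)" 2 "Cs*Cs"] by simp
    qed
    have arec: "a (Suc k) = N * t * (\<Sum>i\<le>k. a i * a (k - i)) + N / t * (\<Sum>i\<le>k+2. c i * c (k + 2 - i))" for k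
      unfolding a_def c_def using a_rec[OF False, of k] cc_eq[of "\<lambda>j. b j * t^j" k] by simp
    have "(\<lambda>k. a (Suc k)) sums (N * t * (y*y) + N / t * (Cs*Cs))"
      unfolding arec by (intro sums_add sums_mult cp1 cp2')
    moreover have "(\<lambda>k. a (Suc k)) sums (y - M)"
      using ay sums_iff_shift[of a 1 "y - M"] a0 by simp
    ultimately have eq: "y - M = N*t*y^2 + N/t*Cs^2"
      using sums_unique2 by (metis power2_eq_square)
    have ynorm: "\<bar>y\<bar> \<le> 2*C"
    proof -
      have "norm y \<le> (\<Sum>m. C * q^m)" unfolding y_def
        by (rule norm_suminf_le) (use abound geo in auto)
      also have "(\<Sum>m. C * q^m) = C / (1 - q)" using q0 q1 by (simp add: suminf_mult suminf_geometric)
      also have "\<dots> \<le> 2*C" using q0 q1 Cpos by (simp add: field_simps)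
      finally show ?thesis by simp
    qed
    have Csnorm: "\<bar>Cs\<bar> \<le> 2*C*q^2"
    proof -
      have sh: "(\<lambda>i. c (i + 2)) sums Cs" using cCs sums_iff_shift[of c 2 Cs] by (simp add: c_def)
      have g2: "summable (\<lambda>i. C * q^2 * q^i)" using q0 q1 by (intro summable_mult summable_geometric) simp
      have "norm Cs \<le> (\<Sum>i. C * q^2 * q^i)" unfolding sums_unique[OF sh]
      proof (rule norm_suminf_le)
        show "norm (c (i + 2)) \<le> C * q^2 * q^i" for i using cbound[of "i+2"] by (simp add: power_add power2_eq_square mult_ac)
      qed (rule g2)
      also have "(\<Sum>i. C * q^2 * q^i) = C * q^2 / (1 - q)" using q0 q1 by (simp add: suminf_mult suminf_geometric)
      also have "\<dots> \<le> 2*C*q^2"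
      proof -
        have "C*q^2*1 \<le> C*q^2*(2*(1-q))" using q0 q1 Cpos by (intro mult_left_mono) auto
        also have "C*q^2*(2*(1-q)) = 2*C*q^2*(1-q)" by (simp add: algebra_simps)
        finally have X: "C*q^2 \<le> 2*C*q^2*(1-q)" by simp
        have "1 - q > 0" using q1 by simp
        then show ?thesis using X by (subst pos_divide_le_eq) auto
      qed
      finally show ?thesis by simp
    qed
    have spos: "1 - 2*N*(Cs/t + t*y) > 0"
    proof -
      have at: "\<bar>t\<bar> > 0" using False by simp
      have "\<bar>Cs/t\<bar> \<le> 2*C*\<bar>t\<bar>/t1^2"
      proof -
        have "\<bar>Cs/t\<bar> = \<bar>Cs\<bar>/\<bar>t\<bar>" by simp
        also have "\<dots> \<le> 2*C*q^2/\<bar>t\<bar>" using Csnorm at by (simp add: divide_right_mono)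
        also have "\<dots> = 2*C*\<bar>t\<bar>/t1^2" unfolding q_def using at t1 by (simp add: field_simps power2_eq_square)
        finally show ?thesis .
      qed
      moreover have "\<bar>t*y\<bar> \<le> 2*C*\<bar>t\<bar>" using ynorm at by (simp add: abs_mult mult_left_mono mult.commute)
      moreover have "2*C*\<bar>t\<bar>/t1^2 + 2*C*\<bar>t\<bar> = 2*C*\<bar>t\<bar>*(1/t1^2 + 1)" by (simp add: algebra_simps)
      moreover have "\<bar>Cs/t + t*y\<bar> \<le> \<bar>Cs/t\<bar> + \<bar>t*y\<bar>" by (rule abs_triangle_ineq)
      ultimately have "\<bar>Cs/t + t*y\<bar> \<le> 2*C*\<bar>t\<bar>*(1/t1^2 + 1)" by linarith
      also have "\<dots> < 2*C*(1/(8*N*C*(1/t1^2 + 1)))*(1/t1^2 + 1)"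
        using tl Cpos t1 unfolding \<epsilon>_def by (intro mult_strict_right_mono mult_strict_left_mono) (auto simp: add_pos_pos)
      also have "\<dots> = 1/(4*N)"
      proof -
        have gen: "\<And>W. W > 0 \<Longrightarrow> 2*C*(1/(8*N*C*W))*W = 1/(4*N)" using Cpos Npos by (simp add: field_simps)
        have "1/t1^2 + 1 > 0" using t1 by (simp add: add_pos_pos)
        then show ?thesis by (rule gen)
      qed
      finally have "\<bar>Cs/t + t*y\<bar> < 1/(4*N)" .
      then have "2*N*\<bar>Cs/t + t*y\<bar> < 2*N*(1/(4*N))" using Npos by (intro mult_strict_left_mono) auto
      moreover have "2*N*(1/(4*N)) = 1/2" using Npos by simp
      ultimately have "2*N*\<bar>Cs/t + t*y\<bar> < 1/2" by simp
      moreover have "2*N*(Cs/t + t*y) \<le> 2*N*\<bar>Cs/t + t*y\<bar>" using Npos by (intro mult_left_mono) auto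
      ultimately have h: "2*N*(Cs/t + t*y) < 1/2" by (rule le_less_trans[rotated])
      have "\<And>z::real. z < 1/2 \<Longrightarrow> 0 < 1 - z" by simp
      from this[OF h] show ?thesis .
    qed
    have "y = (M + t * (M^2 * N + 1 / (2 * N))
           - t * sqrt (1 / (4 * N^2) - t * (2 * M^3 * N + M / N) - t^2 * M^4 * N^2)) / (t^2 + 1)"
      by (rule alg[OF False yeq eq spos])
    then show ?thesis using ay unfolding a_def by simp
  qed
  then show ?thesis using epos by blast
qed

end

theorem lemma5:
  fixes M N :: real
  assumes "M > 0" and "N > 0"
  shows "\<exists>\<epsilon>>0. \<forall>t::real. \<bar>t\<bar> < \<epsilon> \<longrightarrow>
     (\<lambda>m. aseq M N m * t ^ m / fact m) sums
       ((M + t * (M^2 * N + 1 / (2 * N))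
           - t * sqrt (1 / (4 * N^2) - t * (2 * M^3 * N + M / N) - t^2 * M^4 * N^2))
        / (t^2 + 1))"
proof -
  define b where "b = (\<lambda>m. aseq M N m / fact m)"
  have brec: "\<And>k. b (Suc k) = N * (\<Sum>r\<le>k. b r * b (k - r)) + N * (\<Sum>r\<in>{2..k}. b r * b (k + 2 - r))"
    unfolding b_def by (rule b_rec)
  have b0: "b 0 = M" unfolding b_def by (simp add: aseq.simps(1))
  have bnn: "\<And>m. b m \<ge> 0" unfolding b_def using aseq_nonneg assms by simp
  have eq: "(\<lambda>m. aseq M N m * t ^ m / fact m) = (\<lambda>m. b m * t ^ m)" for t :: real
    unfolding b_def by (simp add: fun_eq_iff)
  show ?thesis unfolding eq by (rule main[OF brec b0 bnn assms])
qed

end
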